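(* Let $\Omega\subseteq\mathbb{R}^2$ be open and let $f=(\phi_1,\phi_2):\Omega\to\mathbb{R}^2$ be a smooth plane transformation. For a nondegenerate triangle with vertices $a,b,c\in\mathbb{R}^2$, let $a'$ denote the mirror vertex of $a$, i.e. the reflection of $a$ across the line through $b$ and $c$. Then for every $x\in\Omega$, $$\lim \frac{\det\big(f(a')-f(a),\; f(c)-f(b)\big)}{2\det\big(b-a,\; c-b\big)} \;=\; \det Df(x)=\partial_1\phi_1(x)\,\partial_2\phi_2(x)-\partial_2\phi_1(x)\,\partial_1\phi_2(x),$$ where the limit is taken as $(a,b,c)\to(x,x,x)$ in $\mathbb{R}^2\times\mathbb{R}^2\times\mathbb{R}^2$, over triples $(a,b,c)$ such that the triangle $a,b,c$ is nondegenerate (i.e. $\det(b-a,c-b)\neq 0$) and the mirror vertex $a'$ is balanced (and $a,b,c,a'\in\Omega$, which holds automatically for such triples close enough to $x$).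
   Context: $\det(u,v)$ denotes the determinant of the $2\times 2$ matrix with rows $u,v\in\mathbb{R}^2$; equivalently $\det(b-a,c-b)=(a\wedge b+b\wedge c+c\wedge a)\cdot\mathbb{I}_2$ in the Clifford algebra of $\mathbb{R}^2$. A real function $\psi:\Omega\to\mathbb{R}$ on an open set $\Omega\subseteq\mathbb{R}^2$ is called smooth if it is $C^2$ on $\Omega$ and $\sup_{x\in\Omega}\max\{|\lambda_1(x)|,|\lambda_2(x)|\}<\infty$, where $\lambda_1(x),\lambda_2(x)$ are the eigenvalues of the Hessian matrix of $\psi$ at $x$. A transformation $f:\Omega\to\mathbb{R}^2$ is smooth if both components $\phi_1,\phi_2$ are smooth functions. For a nondegenerate triangle with vertices $a,b,c$, the mirror vertex of $a$ is $a'=-\big[a+2b\frac{(a-c)\cdot(c-b)}{|c-b|^2}+2c\frac{(b-a)\cdot(c-b)}{|c-b|^2}\big]$, the reflection of $a$ across the line through $b,c$. The mirror vertex $a'$ is called balanced if the point $\bar a=\frac12(a+a')$ (the foot of the perpendicular from $a$ to the line $bc$) lies in the closed segment $[b,c]$. *)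

theory Defs
  imports "HOL-Analysis.Analysis"
begin

definition det2 :: "real^2 \<Rightarrow> real^2 \<Rightarrow> real" where
  "det2 u v = u$1 * v$2 - u$2 * v$1"

definition smooth_fun :: "(real^2) set \<Rightarrow> (real^2 \<Rightarrow> real) \<Rightarrow> bool" where
  "smooth_fun \<Omega> \<psi> \<longleftrightarrow>
     (\<exists>D :: real^2 \<Rightarrow> real^2. \<exists>H :: real^2 \<Rightarrow> real^2^2.
        (\<forall>x\<in>\<Omega>. (\<psi> has_derivative (\<lambda>h. D x \<bullet> h)) (at x)) \<and>
        (\<forall>x\<in>\<Omega>. (D has_derivative (\<lambda>h. H x *v h)) (at x)) \<and>
        continuous_on \<Omega> H \<and>
        (\<exists>B::real. \<forall>x\<in>\<Omega>. \<forall>l::real. \<forall>v::real^2.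
            v \<noteq> 0 \<and> H x *v v = l *\<^sub>R v \<longrightarrow> \<bar>l\<bar> \<le> B))"

definition smooth_transf :: "(real^2) set \<Rightarrow> (real^2 \<Rightarrow> real^2) \<Rightarrow> bool" where
  "smooth_transf \<Omega> f \<longleftrightarrow> smooth_fun \<Omega> (\<lambda>y. f y $ 1) \<and> smooth_fun \<Omega> (\<lambda>y. f y $ 2)"

definition mirror_vertex :: "real^2 \<Rightarrow> real^2 \<Rightarrow> real^2 \<Rightarrow> real^2" where
  "mirror_vertex a b c =
     - (a + ((2 * ((a - c) \<bullet> (c - b)) / (norm (c - b))^2) *\<^sub>R b)
          + ((2 * ((b - a) \<bullet> (c - b)) / (norm (c - b))^2) *\<^sub>R c))"

definition balanced :: "real^2 \<Rightarrow> real^2 \<Rightarrow> real^2 \<Rightarrow> bool" where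
  "balanced a b c \<longleftrightarrow> (1/2) *\<^sub>R (a + mirror_vertex a b c) \<in> closed_segment b c"

end

theory Submission
  imports Defs
begin


lemma inner2: "(u::real^2) \<bullet> v = u$1 * v$1 + u$2 * v$2"
  by (simp add: inner_vec_def sum_2)

lemma det2_lin: "det2 (x + y) v = det2 x v + det2 y v" "det2 (r *\<^sub>R x) v = r * det2 x v"
  "det2 v v = 0" "det2 (x - y) v = det2 x v - det2 y v"
  by (simp_all add: det2_def algebra_simps)

lemma mirror_eq0:
  assumes "c \<noteq> b"
  shows "mirror_vertex a b c = - a + 2 *\<^sub>R b + (2 * ((a - b) \<bullet> (c - b)) / ((c - b) \<bullet> (c - b))) *\<^sub>R (c - b)"
proof -
  define v where "v = c - b"
  define N where "N = v \<bullet> v"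
  have N: "N \<noteq> 0" using assms by (simp add: N_def v_def)
  have nn: "(norm (c - b))^2 = N" by (simp add: N_def v_def power2_norm_eq_inner)
  have c: "c = b + v" by (simp add: v_def)
  have sum: "2 * ((a - c) \<bullet> v) / N + 2 * ((b - a) \<bullet> v) / N = -2"
    using N by (simp add: c field_simps N_def inner_diff_left inner_add_left)
  have "mirror_vertex a b c = - (a + (2 * ((a - c) \<bullet> v) / N) *\<^sub>R b + (2 * ((b - a) \<bullet> v) / N) *\<^sub>R (b + v))"
    unfolding mirror_vertex_def nn by (simp add: v_def c[symmetric])
  also have "\<dots> = - a - (2 * ((a - c) \<bullet> v) / N + 2 * ((b - a) \<bullet> v) / N) *\<^sub>R b - (2 * ((b - a) \<bullet> v) / N) *\<^sub>R v"
    by (simp add: algebra_simps scaleR_add_left)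
  also have "\<dots> = - a + 2 *\<^sub>R b + (2 * ((a - b) \<bullet> v) / N) *\<^sub>R v"
    unfolding sum by (simp add: inner_diff_left algebra_simps diff_divide_distrib)
  finally show ?thesis unfolding v_def N_def .
qed

lemma mirror_eq:
  assumes "c \<noteq> b"
  shows "mirror_vertex a b c - a = 2 *\<^sub>R (b - a) + (2 * ((a - b) \<bullet> (c - b)) / ((c - b) \<bullet> (c - b))) *\<^sub>R (c - b)"
  unfolding mirror_eq0[OF assms] by (simp add: algebra_simps scaleR_2)

lemma perp_gen:
  fixes w v :: "real^2"
  assumes "v \<bullet> v \<noteq> 0"
  shows "(2 *\<^sub>R w + (2 * ((- w) \<bullet> v) / (v \<bullet> v)) *\<^sub>R v) \<bullet> v = 0"
  using assms by (simp add: inner_diff_left)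

lemma mirror_props:
  assumes "c \<noteq> b"
  shows "(mirror_vertex a b c - a) \<bullet> (c - b) = 0"
    and "det2 (mirror_vertex a b c - a) (c - b) = 2 * det2 (b - a) (c - b)"
proof -
  have N: "(c - b) \<bullet> (c - b) \<noteq> 0" using assms by simp
  have e: "a - b = - (b - a)" by simp
  show "(mirror_vertex a b c - a) \<bullet> (c - b) = 0"
    unfolding mirror_eq[OF assms] e by (rule perp_gen[OF N])
  show "det2 (mirror_vertex a b c - a) (c - b) = 2 * det2 (b - a) (c - b)"
    unfolding mirror_eq[OF assms] by (simp add: det2_lin)
qed

lemma lagrange2: "(norm u * norm v)^2 = (det2 u v)^2 + (u \<bullet> v)^2"
    unfolding power_mult_distrib power2_norm_eq_inner det2_def inner2
    by (simp add: algebra_simps power2_eq_square)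

lemma perp_det: assumes "u \<bullet> v = 0" shows "norm u * norm v = \<bar>det2 u v\<bar>"
proof -
  have "\<bar>norm u * norm v\<bar> = \<bar>det2 u v\<bar>"
    using lagrange2[of u v] assms by (metis add.right_neutral power2_abs power2_eq_iff_nonneg abs_ge_zero power_zero_numeral)
  then show ?thesis by simp
qed

lemma det_bound: "\<bar>det2 u v\<bar> \<le> norm u * norm v"
proof -
  have "\<bar>det2 u v\<bar> \<le> \<bar>norm u * norm v\<bar>"
    unfolding abs_le_square_iff using lagrange2[of u v] by simp
  then show ?thesis by simp
qed



lemma strict_diff:
  fixes \<psi> :: "real^2 \<Rightarrow> real" and D :: "real^2 \<Rightarrow> real^2"
  assumes "open \<Omega>" "x \<in> \<Omega>" "\<forall>y\<in>\<Omega>. (\<psi> has_derivative (\<lambda>h. D y \<bullet> h)) (at y)"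
    "continuous (at x) D" "\<epsilon> > 0"
  shows "\<exists>\<delta>>0. \<forall>p q. dist p x < \<delta> \<longrightarrow> dist q x < \<delta> \<longrightarrow>
            \<bar>\<psi> p - \<psi> q - D x \<bullet> (p - q)\<bar> \<le> \<epsilon> * norm (p - q)"
proof -
  obtain r where r: "r > 0" "ball x r \<subseteq> \<Omega>" using assms(1,2) open_contains_ball by blast
  obtain s where s: "s > 0" "\<forall>y. dist y x < s \<longrightarrow> dist (D y) (D x) < \<epsilon>"
    using assms(4,5) unfolding continuous_at_eps_delta by blast
  define \<delta> where "\<delta> = min r s"
  have \<delta>: "\<delta> > 0" using r s by (simp add: \<delta>_def)
  show ?thesis
  proof (intro exI[of _ \<delta>] conjI allI impI \<delta>)
    fix p q assume p: "dist p x < \<delta>" and q: "dist q x < \<delta>"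
    have "norm (\<psi> p - \<psi> q - D x \<bullet> (p - q)) \<le> norm (p - q) * \<epsilon>"
    proof (rule differentiable_bound_linearization[of q p "ball x \<delta>" \<psi> "\<lambda>y h. D y \<bullet> h" x \<epsilon>])
      fix t :: real assume t: "t \<in> {0..1}"
      have "(1 - t) *\<^sub>R q + t *\<^sub>R p \<in> ball x \<delta>"
        using convex_ball[of x \<delta>] t p q unfolding convex_alt by (auto simp: dist_commute)
      moreover have "(1 - t) *\<^sub>R q + t *\<^sub>R p = q + t *\<^sub>R (p - q)" by (simp add: algebra_simps)
      ultimately show "q + t *\<^sub>R (p - q) \<in> ball x \<delta>" by simp
    next
      fix y assume "y \<in> ball x \<delta>"
      then have "y \<in> \<Omega>" using r \<delta>_def by auto
      then show "(\<psi> has_derivative (\<lambda>h. D y \<bullet> h)) (at y within ball x \<delta>)"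
        using assms(3) has_derivative_at_withinI by blast
    next
      fix y assume y: "y \<in> ball x \<delta>"
      then have "dist (D y) (D x) < \<epsilon>" using s \<delta>_def by (auto simp: dist_commute)
      then have ny: "norm (D y - D x) \<le> \<epsilon>" by (simp add: dist_norm)
      show "onorm ((\<lambda>h. D y \<bullet> h) - (\<lambda>h. D x \<bullet> h)) \<le> \<epsilon>"
      proof (rule onorm_le)
        fix h
        have "norm (((\<lambda>h. D y \<bullet> h) - (\<lambda>h. D x \<bullet> h)) h) = \<bar>(D y - D x) \<bullet> h\<bar>"
          by (simp add: inner_diff_left)
        also have "\<dots> \<le> norm (D y - D x) * norm h" by (rule Cauchy_Schwarz_ineq2)
        also have "\<dots> \<le> \<epsilon> * norm h" by (rule mult_right_mono[OF ny]) simp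
        finally show "norm (((\<lambda>h. D y \<bullet> h) - (\<lambda>h. D x \<bullet> h)) h) \<le> \<epsilon> * norm h" .
      qed
    qed (use \<delta> in auto)
    then show "\<bar>\<psi> p - \<psi> q - D x \<bullet> (p - q)\<bar> \<le> \<epsilon> * norm (p - q)" by (simp add: mult.commute)
  qed
qed

lemma jac:
  fixes f :: "real^2 \<Rightarrow> real^2"
  assumes "((\<lambda>y. f y $ 1) has_derivative (\<lambda>h. D1 \<bullet> h)) (at x)"
    "((\<lambda>y. f y $ 2) has_derivative (\<lambda>h. D2 \<bullet> h)) (at x)"
  shows "det (jacobian f (at x)) = D1$1 * D2$2 - D1$2 * D2$1"
proof -
  have fe: "f = (\<lambda>y. (f y $ 1) *\<^sub>R axis 1 1 + (f y $ 2) *\<^sub>R axis 2 1)"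
    by (rule ext) (simp add: vec_eq_iff forall_2 axis_def)
  have "(f has_derivative (\<lambda>h. (D1 \<bullet> h) *\<^sub>R axis 1 1 + (D2 \<bullet> h) *\<^sub>R axis 2 1)) (at x)"
    by (subst fe, intro has_derivative_add has_derivative_scaleR_left assms)
  then have "frechet_derivative f (at x) = (\<lambda>h. (D1 \<bullet> h) *\<^sub>R axis 1 1 + (D2 \<bullet> h) *\<^sub>R axis 2 1)"
    by (rule frechet_derivative_at[symmetric])
  then show ?thesis
    by (simp add: jacobian_def det_2 matrix_def axis_def inner2)
qed



lemma err_bound:
  fixes A1 A2 B1 B2 e1 e2 g1 g2 n1 n2 U V \<epsilon> :: real
  assumes "\<bar>A1\<bar> \<le> n1 * U" "\<bar>A2\<bar> \<le> n2 * U" "\<bar>B1\<bar> \<le> n1 * V" "\<bar>B2\<bar> \<le> n2 * V"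
    "\<bar>e1\<bar> \<le> \<epsilon> * U" "\<bar>e2\<bar> \<le> \<epsilon> * U" "\<bar>g1\<bar> \<le> \<epsilon> * V" "\<bar>g2\<bar> \<le> \<epsilon> * V"
    "0 \<le> \<epsilon>" "\<epsilon> \<le> 1" "0 \<le> U" "0 \<le> V" "0 \<le> n1" "0 \<le> n2"
  shows "\<bar>(A1 + e1) * (B2 + g2) - (A2 + e2) * (B1 + g1) - (A1 * B2 - A2 * B1)\<bar>
           \<le> 2 * (n1 + n2 + 1) * \<epsilon> * (U * V)"
proof -
  have t1: "\<bar>A1 * g2\<bar> \<le> (n1 * U) * (\<epsilon> * V)" unfolding abs_mult
    by (rule mult_mono) (use assms in auto)
  have t2: "\<bar>e1 * B2\<bar> \<le> (\<epsilon> * U) * (n2 * V)" unfolding abs_mult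
    by (rule mult_mono) (use assms in auto)
  have t3: "\<bar>e1 * g2\<bar> \<le> (\<epsilon> * U) * (\<epsilon> * V)" unfolding abs_mult
    by (rule mult_mono) (use assms in auto)
  have t4: "\<bar>A2 * g1\<bar> \<le> (n2 * U) * (\<epsilon> * V)" unfolding abs_mult
    by (rule mult_mono) (use assms in auto)
  have t5: "\<bar>e2 * B1\<bar> \<le> (\<epsilon> * U) * (n1 * V)" unfolding abs_mult
    by (rule mult_mono) (use assms in auto)
  have t6: "\<bar>e2 * g1\<bar> \<le> (\<epsilon> * U) * (\<epsilon> * V)" unfolding abs_mult
    by (rule mult_mono) (use assms in auto)
  have ee: "\<epsilon> * \<epsilon> * (U * V) \<le> \<epsilon> * (U * V)"
    using assms by (intro mult_right_mono) (auto simp: mult_le_one mult_left_le_one_le)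
  have "\<bar>(A1 + e1) * (B2 + g2) - (A2 + e2) * (B1 + g1) - (A1 * B2 - A2 * B1)\<bar>
      = \<bar>A1 * g2 + e1 * B2 + e1 * g2 - A2 * g1 - e2 * B1 - e2 * g1\<bar>"
    by (simp add: algebra_simps)
  also have "\<dots> \<le> \<bar>A1 * g2\<bar> + \<bar>e1 * B2\<bar> + \<bar>e1 * g2\<bar> + \<bar>A2 * g1\<bar> + \<bar>e2 * B1\<bar> + \<bar>e2 * g1\<bar>"
    by linarith
  also have "\<dots> \<le> 2 * (n1 + n2) * \<epsilon> * (U * V) + 2 * (\<epsilon> * \<epsilon> * (U * V))"
    using t1 t2 t3 t4 t5 t6 by (simp add: algebra_simps)
  also have "\<dots> \<le> 2 * (n1 + n2 + 1) * \<epsilon> * (U * V)"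
    using ee by (simp add: algebra_simps)
  finally show ?thesis .
qed

lemma cb_identity:
  fixes D1 D2 u v :: "real^2"
  shows "(D1 \<bullet> u) * (D2 \<bullet> v) - (D2 \<bullet> u) * (D1 \<bullet> v) = (D1$1 * D2$2 - D1$2 * D2$1) * det2 u v"
  by (simp add: inner2 det2_def algebra_simps)

theorem theorem1:
  fixes \<Omega> :: "(real^2) set" and f :: "real^2 \<Rightarrow> real^2" and x :: "real^2"
  assumes "open \<Omega>" and "smooth_transf \<Omega> f" and "x \<in> \<Omega>"
  shows "((\<lambda>(a, b, c). det2 (f (mirror_vertex a b c) - f a) (f c - f b) / (2 * det2 (b - a) (c - b)))
           \<longlongrightarrow> det (jacobian f (at x)))
         (at (x, x, x) within
            {(a, b, c). det2 (b - a) (c - b) \<noteq> 0 \<and> balanced a b c \<and>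
                        a \<in> \<Omega> \<and> b \<in> \<Omega> \<and> c \<in> \<Omega> \<and> mirror_vertex a b c \<in> \<Omega>})"
proof -
  obtain D1 H1 where D1: "\<forall>y\<in>\<Omega>. ((\<lambda>y. f y $ 1) has_derivative (\<lambda>h. D1 y \<bullet> h)) (at y)"
    and H1: "\<forall>y\<in>\<Omega>. (D1 has_derivative (\<lambda>h. H1 y *v h)) (at y)"
    using assms(2) unfolding smooth_transf_def smooth_fun_def by blast
  obtain D2 H2 where D2: "\<forall>y\<in>\<Omega>. ((\<lambda>y. f y $ 2) has_derivative (\<lambda>h. D2 y \<bullet> h)) (at y)"
    and H2: "\<forall>y\<in>\<Omega>. (D2 has_derivative (\<lambda>h. H2 y *v h)) (at y)"
    using assms(2) unfolding smooth_transf_def smooth_fun_def by blast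
  have c1: "isCont D1 x" using H1 assms(3) has_derivative_continuous by blast
  have c2: "isCont D2 x" using H2 assms(3) has_derivative_continuous by blast
  define J where "J = D1 x $ 1 * D2 x $ 2 - D1 x $ 2 * D2 x $ 1"
  have jacJ: "det (jacobian f (at x)) = J"
    unfolding J_def using D1 D2 assms(3) by (intro jac) auto
  define K where "K = norm (D1 x) + norm (D2 x) + 1"
  have K: "K > 0" unfolding K_def by (simp add: add_nonneg_pos)
  show ?thesis unfolding jacJ Lim_within
  proof (intro allI impI)
    fix e :: real assume e: "e > 0"
    define \<epsilon> where "\<epsilon> = min 1 (e / (4 * K))"
    have \<epsilon>: "\<epsilon> > 0" "\<epsilon> \<le> 1" "\<epsilon> \<le> e / (4 * K)" using e K by (auto simp: \<epsilon>_def)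
    obtain \<delta>1 where \<delta>1: "\<delta>1 > 0" "\<forall>p q. dist p x < \<delta>1 \<longrightarrow> dist q x < \<delta>1 \<longrightarrow>
            \<bar>f p $ 1 - f q $ 1 - D1 x \<bullet> (p - q)\<bar> \<le> \<epsilon> * norm (p - q)"
      using strict_diff[OF assms(1,3) D1 c1 \<epsilon>(1)] by blast
    obtain \<delta>2 where \<delta>2: "\<delta>2 > 0" "\<forall>p q. dist p x < \<delta>2 \<longrightarrow> dist q x < \<delta>2 \<longrightarrow>
            \<bar>f p $ 2 - f q $ 2 - D2 x \<bullet> (p - q)\<bar> \<le> \<epsilon> * norm (p - q)"
      using strict_diff[OF assms(1,3) D2 c2 \<epsilon>(1)] by blast
    define d where "d = min \<delta>1 \<delta>2 / 5"
    have d: "d > 0" using \<delta>1 \<delta>2 by (simp add: d_def)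
    show "\<exists>d>0. \<forall>t\<in>{(a, b, c). det2 (b - a) (c - b) \<noteq> 0 \<and> balanced a b c \<and>
                        a \<in> \<Omega> \<and> b \<in> \<Omega> \<and> c \<in> \<Omega> \<and> mirror_vertex a b c \<in> \<Omega>}.
        0 < dist t (x, x, x) \<and> dist t (x, x, x) < d \<longrightarrow>
        dist ((\<lambda>(a, b, c). det2 (f (mirror_vertex a b c) - f a) (f c - f b) / (2 * det2 (b - a) (c - b))) t) J < e"
    proof (intro exI[of _ d] conjI d ballI impI)
      fix t assume tS: "t \<in> {(a, b, c). det2 (b - a) (c - b) \<noteq> 0 \<and> balanced a b c \<and>
                        a \<in> \<Omega> \<and> b \<in> \<Omega> \<and> c \<in> \<Omega> \<and> mirror_vertex a b c \<in> \<Omega>}"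
        and td: "0 < dist t (x, x, x) \<and> dist t (x, x, x) < d"
      obtain a b c where t: "t = (a, b, c)" by (cases t) auto
      have d0: "det2 (b - a) (c - b) \<noteq> 0" using tS t by auto
      have ax: "dist a x < d" using td t dist_fst_le[of t "(x,x,x)"] by simp
      have bx: "dist b x < d" using td t dist_fst_le[of "snd t" "(x,x)"] dist_snd_le[of t "(x,x,x)"] by simp
      have cx: "dist c x < d" using td t dist_snd_le[of "snd t" "(x,x)"] dist_snd_le[of t "(x,x,x)"] by simp
      have cb: "c \<noteq> b" using d0 by (auto simp: det2_def)
      define a' where "a' = mirror_vertex a b c"
      define u where "u = a' - a"
      define v where "v = c - b"
      define D where "D = det2 (b - a) (c - b)"
      have uv: "u \<bullet> v = 0" and du: "det2 u v = 2 * D"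
        using mirror_props[OF cb, of a] by (simp_all add: u_def v_def a'_def D_def)
      have UV: "norm u * norm v = 2 * \<bar>D\<bar>" using perp_det[OF uv] du by simp
      have vpos: "norm v > 0" using cb by (simp add: v_def)
      have "norm u * norm v \<le> 2 * norm (b - a) * norm v"
        using UV det_bound[of "b - a" "c - b"] by (simp add: D_def v_def)
      then have un: "norm u \<le> 2 * norm (b - a)" using vpos by simp
      have ba: "norm (b - a) \<le> dist b x + dist a x" by (metis dist_norm dist_triangle2 dist_commute)
      have "dist a' x \<le> norm u + dist a x" unfolding u_def
        by (metis dist_norm dist_triangle2 dist_commute norm_minus_commute)
      then have a'x: "dist a' x < 5 * d" using un ba ax bx by linarith
      have m1: "5 * d \<le> \<delta>1" "5 * d \<le> \<delta>2" by (simp_all add: d_def)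
      define A1 where "A1 = D1 x \<bullet> u"
      define A2 where "A2 = D2 x \<bullet> u"
      define B1 where "B1 = D1 x \<bullet> v"
      define B2 where "B2 = D2 x \<bullet> v"
      define e1 where "e1 = f a' $ 1 - f a $ 1 - A1"
      define e2 where "e2 = f a' $ 2 - f a $ 2 - A2"
      define g1 where "g1 = f c $ 1 - f b $ 1 - B1"
      define g2 where "g2 = f c $ 2 - f b $ 2 - B2"
      have he1: "\<bar>e1\<bar> \<le> \<epsilon> * norm u" unfolding e1_def A1_def u_def
        using \<delta>1(2) a'x ax m1 d by auto
      have he2: "\<bar>e2\<bar> \<le> \<epsilon> * norm u" unfolding e2_def A2_def u_def
        using \<delta>2(2) a'x ax m1 d by auto
      have hg1: "\<bar>g1\<bar> \<le> \<epsilon> * norm v" unfolding g1_def B1_def v_def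
        using \<delta>1(2) cx bx m1 d by auto
      have hg2: "\<bar>g2\<bar> \<le> \<epsilon> * norm v" unfolding g2_def B2_def v_def
        using \<delta>2(2) cx bx m1 d by auto
      have hA1: "\<bar>A1\<bar> \<le> norm (D1 x) * norm u" unfolding A1_def by (rule Cauchy_Schwarz_ineq2)
      have hA2: "\<bar>A2\<bar> \<le> norm (D2 x) * norm u" unfolding A2_def by (rule Cauchy_Schwarz_ineq2)
      have hB1: "\<bar>B1\<bar> \<le> norm (D1 x) * norm v" unfolding B1_def by (rule Cauchy_Schwarz_ineq2)
      have hB2: "\<bar>B2\<bar> \<le> norm (D2 x) * norm v" unfolding B2_def by (rule Cauchy_Schwarz_ineq2)
      have eq: "det2 (f a' - f a) (f c - f b) = (A1 + e1) * (B2 + g2) - (A2 + e2) * (B1 + g1)"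
        unfolding det2_def e1_def e2_def g1_def g2_def by simp
      have main: "A1 * B2 - A2 * B1 = J * (2 * D)"
        unfolding A1_def A2_def B1_def B2_def J_def cb_identity du[symmetric] ..
      have err: "\<bar>det2 (f a' - f a) (f c - f b) - J * (2 * D)\<bar> \<le> 2 * K * \<epsilon> * (2 * \<bar>D\<bar>)"
        unfolding eq main[symmetric] UV[symmetric] K_def
        by (rule err_bound[OF hA1 hA2 hB1 hB2 he1 he2 hg1 hg2]) (use \<epsilon> in auto)
      have Dp: "\<bar>D\<bar> > 0" using d0 by (simp add: D_def)
      have "\<bar>det2 (f a' - f a) (f c - f b) / (2 * D) - J\<bar>
            = \<bar>det2 (f a' - f a) (f c - f b) - J * (2 * D)\<bar> / (2 * \<bar>D\<bar>)"
        using Dp by (simp add: field_simps abs_divide abs_mult)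
      also have "\<dots> \<le> 2 * K * \<epsilon>"
        using err Dp by (simp add: divide_le_eq)
      also have "\<dots> \<le> 2 * K * (e / (4 * K))"
        using \<epsilon>(3) K by (intro mult_left_mono) auto
      also have "\<dots> < e" using K e by (simp add: field_simps)
      finally show "dist ((\<lambda>(a, b, c). det2 (f (mirror_vertex a b c) - f a) (f c - f b) / (2 * det2 (b - a) (c - b))) t) J < e"
        unfolding t dist_real_def by (simp add: a'_def D_def)
    qed
  qed
qed

end
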